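(* Let $\lambda>0$ and $0<\nu<2$. Let $u_\nu$ be the solution of $\frac{\partial^{\nu}u}{\partial t^{\nu}}=\lambda^2\frac{\partial^2u}{\partial x^2}$, $x\in\mathbb{R}$, $t>0$, with $u(x,0)=\delta(x)$ if $0<\nu\le1$ and $u(x,0)=\delta(x)$, $u_t(x,0)=0$ if $1<\nu<2$. Then for $x\neq0$, \[ u_\nu(x,t)=\frac{1}{\pi\nu|x|}\int_0^{+\infty}e^{-w}\,e^{-\frac{|x|w^{\nu/2}}{\lambda t^{\nu/2}}\cos\frac{\nu\pi}{2}}\sin\!\left(\frac{|x|w^{\nu/2}}{\lambda t^{\nu/2}}\sin\frac{\nu\pi}{2}\right)dw. \]
   Context: Fractional derivatives are in the Dzherbashyan–Caputo sense: for $m-1<\nu<m$, $\frac{\partial^{\nu}u}{\partial t^{\nu}}(x,t)=\frac{1}{\Gamma(m-\nu)}\int_0^t (t-s)^{m-\nu-1}\frac{\partial^m u}{\partial s^m}(x,s)\,ds$; for $\nu=m$ the ordinary derivative. The solution is $u_\nu(x,t)=\frac{1}{2\lambda t^{\nu/2}}\sum_{k\ge0}\frac{(-|x|/(\lambda t^{\nu/2}))^k}{k!\,\Gamma(-\nu k/2+1-\nu/2)}$. *)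

theory Defs
  imports "HOL-Analysis.Analysis"
begin

text \<open>The reciprocal Gamma function is the entire function rGamma
  (so the terms at poles of Gamma vanish, as in 1/Gamma).\<close>
definition u_sol :: "real \<Rightarrow> real \<Rightarrow> real \<Rightarrow> real \<Rightarrow> real" where
  "u_sol \<nu> lam x t =
     1 / (2 * lam * t powr (\<nu>/2)) *
     (\<Sum>k. (- \<bar>x\<bar> / (lam * t powr (\<nu>/2))) ^ k / fact k
            * rGamma (- \<nu> * real k / 2 + 1 - \<nu> / 2))"

end

theory Submission
  imports Defs
begin

lemma rGamma_refl_real:
  fixes z :: real assumes "z > 0"
  shows "rGamma (1 - z) = sin (pi * z) * Gamma (z + 1) / (pi * z)"
proof -
  have "complex_of_real (rGamma z * rGamma (1 - z)) = complex_of_real (sin (pi * z) / pi)"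
    using rGamma_reflection_complex[of "of_real z"]
    by (simp add: rGamma_complex_of_real[symmetric] sin_of_real[symmetric])
  hence e: "rGamma z * rGamma (1 - z) = sin (pi * z) / pi" using of_real_eq_iff by blast
  have g: "Gamma (z+1) > 0" using assms by simp
  have "rGamma z = z * rGamma (z+1)" using rGamma_plus1[of z] by simp
  also have "rGamma (z+1) = 1 / Gamma (z+1)" by (simp add: rGamma_inverse_Gamma field_simps)
  finally have "rGamma z = z / Gamma (z+1)" by simp
  with e have h: "z / Gamma (z+1) * rGamma (1 - z) = sin (pi * z) / pi" by simp
  have gn: "Gamma (z+1) \<noteq> 0" using g by linarith
  have q: "(z / Gamma (z+1)) * (Gamma (z+1) / z) = 1" using gn assms by (simp del: Gamma_real_pos)
  have "(z / Gamma (z+1) * rGamma (1 - z)) * (Gamma (z+1) / z)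
        = rGamma (1 - z) * ((z / Gamma (z+1)) * (Gamma (z+1) / z))" by (simp only: mult_ac)
  hence "rGamma (1 - z) = (z / Gamma (z+1) * rGamma (1 - z)) * (Gamma (z+1) / z)"
    unfolding q by simp
  also have "\<dots> = sin (pi * z) / pi * (Gamma (z+1) / z)" by (simp only: h)
  finally show ?thesis by (simp add: divide_simps)
qed

lemma powr_bound:
  fixes a \<beta> :: real assumes "a > 0" "0 < \<beta>" "\<beta> < 1"
  shows "\<exists>C. \<forall>w\<ge>0. a * w powr \<beta> \<le> w / 2 + C"
proof -
  define W where "W = (2*a) powr (1/(1-\<beta>))"
  have Wpos: "W > 0" using assms by (simp add: W_def)
  have WW: "W powr (1-\<beta>) = 2*a" using assms by (simp add: W_def powr_powr)
  show ?thesis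
  proof (intro exI allI impI)
    fix w :: real assume w: "w \<ge> 0"
    show "a * w powr \<beta> \<le> w/2 + a * W powr \<beta>"
    proof (cases "w \<le> W")
      case True
      hence "w powr \<beta> \<le> W powr \<beta>" using w assms by (intro powr_mono2) auto
      hence "a * w powr \<beta> \<le> a * W powr \<beta>" using assms by (intro mult_left_mono) auto
      thus ?thesis using w by linarith
    next
      case False
      hence "W powr (1-\<beta>) \<le> w powr (1-\<beta>)" using Wpos assms by (intro powr_mono2) auto
      hence "2*a \<le> w powr (1-\<beta>)" using WW by simp
      hence "2*a * w powr \<beta> \<le> w powr (1-\<beta>) * w powr \<beta>" by (intro mult_right_mono) auto
      also have "\<dots> = w powr ((1-\<beta>) + \<beta>)" by (simp only: powr_add)
      also have "\<dots> = w" using False Wpos by simp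
      finally have "2*a * w powr \<beta> \<le> w" .
      moreover have "0 \<le> a * W powr \<beta>" using assms by simp
      ultimately show ?thesis by linarith
    qed
  qed
qed

lemma exp_partial_le:
  fixes y :: real assumes "y \<ge> 0"
  shows "(\<Sum>n<N. y^n / fact n) \<le> exp y"
proof -
  have s: "(\<lambda>n. y^n / fact n) sums exp y" using exp_converges[of y] by (simp add: divide_inverse mult.commute)
  show ?thesis using sum_le_suminf[OF sums_summable[OF s], of "{..<N}"] sums_unique[OF s] assms by auto
qed


lemma sin_n_pi_minus:
  "sin (real n * (pi - th)) = - ((-1)^n) * sin (real n * th)"
proof -
  have "real n * (pi - th) = real n * pi - real n * th" by (simp add: algebra_simps)
  thus ?thesis by (simp add: sin_diff)
qed

theorem corollary5p1:
  fixes lam \<nu> x t :: real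
  assumes "lam > 0" and "0 < \<nu>" and "\<nu> < 2" and "t > 0" and "x \<noteq> 0"
  defines "f \<equiv> (\<lambda>w::real. exp (- w)
      * exp (- (\<bar>x\<bar> * w powr (\<nu>/2) / (lam * t powr (\<nu>/2))) * cos (\<nu> * pi / 2))
      * sin ((\<bar>x\<bar> * w powr (\<nu>/2) / (lam * t powr (\<nu>/2))) * sin (\<nu> * pi / 2)))"
  shows "f integrable_on {0..} \<and>
         u_sol \<nu> lam x t = 1 / (pi * \<nu> * \<bar>x\<bar>) * integral {0..} f"
proof -
  define tp where "tp = t powr (\<nu>/2)"
  have tp: "tp > 0" using assms by (simp add: tp_def)
  define a where "a = \<bar>x\<bar> / (lam * tp)"
  have a: "a > 0" using assms tp by (simp add: a_def)
  define \<beta> where "\<beta> = \<nu>/2"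
  have b: "0 < \<beta>" "\<beta> < 1" using assms by (auto simp: \<beta>_def)
  define \<theta> where "\<theta> = \<nu> * pi / 2"
  define c where "c = (\<lambda>n::nat. sin (real n * (pi - \<theta>)) / fact n)"
  define g where "g = (\<lambda>(n::nat) (w::real). a^n * c n * (w powr (\<beta> * real n) / exp w))"
  define I where "I = (\<lambda>n::nat. a^n * c n * Gamma (\<beta> * real n + 1))"
  define F where "F = (\<lambda>N w. \<Sum>n<N. g n w)"
  have hg: "(g n has_integral I n) {0..}" for n
  proof -
    have "((\<lambda>w. w powr (\<beta> * real n + 1 - 1) / exp w) has_integral Gamma (\<beta> * real n + 1)) {0..}"
      using b by (intro Gamma_integral_real) (smt (verit) mult_nonneg_nonneg of_nat_0_le_iff)
    hence "((\<lambda>w. w powr (\<beta> * real n) / exp w) has_integral Gamma (\<beta> * real n + 1)) {0..}" by simp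
    from has_integral_mult_right[OF this, of "a^n * c n"] show ?thesis
      unfolding g_def I_def by simp
  qed
  have hF: "(F N has_integral (\<Sum>n<N. I n)) {0..}" for N
    unfolding F_def by (rule has_integral_sum) (auto intro: hg)
  obtain C where C: "\<And>w. w \<ge> 0 \<Longrightarrow> a * w powr \<beta> \<le> w / 2 + C"
    using powr_bound[OF a b] by blast
  define h where "h = (\<lambda>w::real. exp C * exp (-(1/2) * w))"
  have hint: "h integrable_on {0..}"
    unfolding h_def using integrable_on_exp_minus_to_infinity[of "1/2" 0]
    by (intro integrable_on_mult_right) auto
  have gb: "\<bar>g n w\<bar> \<le> (a * w powr \<beta>)^n / fact n / exp w" if w: "w \<ge> 0" for n w
  proof (cases "w = 0")
    case True thus ?thesis by (simp add: g_def)
  next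
    case False
    have pw: "w powr (\<beta> * real n) = (w powr \<beta>)^n" using False by (simp add: powr_power mult.commute)
    have "\<bar>c n\<bar> \<le> 1 / fact n" unfolding c_def by (simp add: abs_sin_le_one divide_right_mono)
    have e: "\<bar>g n w\<bar> = \<bar>c n\<bar> * ((a * w powr \<beta>)^n / exp w)"
      unfolding g_def pw using a by (simp add: abs_mult power_mult_distrib)
    have "\<bar>c n\<bar> * ((a * w powr \<beta>)^n / exp w) \<le> 1 / fact n * ((a * w powr \<beta>)^n / exp w)"
      by (rule mult_right_mono[OF \<open>\<bar>c n\<bar> \<le> 1 / fact n\<close>]) (use a in auto)
    thus ?thesis unfolding e by simp
  qed
  have Fb: "norm (F N w) \<le> h w" if w: "w \<in> {0..}" for N w
  proof -
    have w0: "w \<ge> 0" using w by simp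
    have "norm (F N w) \<le> (\<Sum>n<N. \<bar>g n w\<bar>)" unfolding F_def by (simp add: sum_abs)
    also have "\<dots> \<le> (\<Sum>n<N. (a * w powr \<beta>)^n / fact n / exp w)"
      by (intro sum_mono gb w0)
    also have "\<dots> = (\<Sum>n<N. (a * w powr \<beta>)^n / fact n) / exp w" by (simp add: sum_divide_distrib)
    also have "\<dots> \<le> exp (a * w powr \<beta>) / exp w"
      using a w0 by (intro divide_right_mono exp_partial_le) auto
    also have "\<dots> = exp (a * w powr \<beta> - w)" by (simp add: exp_diff)
    also have "\<dots> \<le> exp (C - w/2)" using C[OF w0] by simp
    also have "\<dots> = h w" by (simp add: h_def exp_add[symmetric])
    finally show ?thesis .
  qed
  have conv: "(\<lambda>N. F N w) \<longlonglongrightarrow> f w" if w: "w \<in> {0..}" for w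
  proof -
    have "(\<lambda>n. g n w) sums f w"
    proof (cases "w = 0")
      case True thus ?thesis by (simp add: g_def f_def)
    next
      case False
      hence wp: "w > 0" using w by simp
      define r where "r = a * w powr \<beta>"
      define z where "z = rcis r (pi - \<theta>)"
      have "(\<lambda>n. Im (z^n /\<^sub>R fact n)) sums Im (exp z)"
        by (rule sums_Im[OF exp_converges])
      hence "(\<lambda>n. Im (z^n /\<^sub>R fact n) / exp w) sums (Im (exp z) / exp w)"
        by (rule sums_divide)
      moreover have "Im (z^n /\<^sub>R fact n) / exp w = g n w" for n
      proof -
        have "Im (z^n /\<^sub>R fact n) = r^n * sin (real n * (pi - \<theta>)) / fact n"
          unfolding z_def DeMoivre2 by (simp add: divide_inverse mult.commute)
        moreover have "r^n = a^n * w powr (\<beta> * real n)"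
          using wp by (simp add: r_def power_mult_distrib powr_power mult.commute)
        ultimately show ?thesis by (simp add: g_def c_def)
      qed
      moreover have "Im (exp z) / exp w = f w"
      proof -
        have rr: "\<bar>x\<bar> * w powr (\<nu>/2) / (lam * t powr (\<nu>/2)) = r"
          by (simp add: r_def a_def tp_def \<beta>_def)
        have "Im (exp z) = exp (- r * cos \<theta>) * sin (r * sin \<theta>)"
          unfolding Im_exp z_def by simp
        thus ?thesis unfolding f_def rr \<theta>_def by (simp add: exp_minus field_simps)
      qed
      ultimately show ?thesis by simp
    qed
    thus ?thesis unfolding F_def sums_def .
  qed
  have fint: "f integrable_on {0..}"
    and lim: "(\<lambda>N. integral {0..} (F N)) \<longlonglongrightarrow> integral {0..} f"
    using dominated_convergence[of F "{0..}" h f, OF _ hint Fb conv] hF by auto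
  have "I sums integral {0..} f"
  proof -
    have eqI: "integral {0..} (F N) = (\<Sum>n<N. I n)" for N by (rule integral_unique[OF hF])
    show ?thesis using lim unfolding sums_def eqI .
  qed
  moreover have "I 0 = 0" by (simp add: I_def c_def)
  ultimately have IS: "(\<lambda>k. I (Suc k)) sums integral {0..} f" using sums_Suc_iff by fastforce
  define T where "T = (\<lambda>k::nat. (- \<bar>x\<bar> / (lam * t powr (\<nu>/2))) ^ k / fact k
            * rGamma (- \<nu> * real k / 2 + 1 - \<nu> / 2))"
  have TI: "T k = 2 / (a * pi * \<nu>) * I (Suc k)" for k
  proof -
    define zz where "zz = \<nu> * real (Suc k) / 2"
    have zz: "zz > 0" using assms by (simp add: zz_def)
    have arg: "- \<nu> * real k / 2 + 1 - \<nu> / 2 = 1 - zz" by (simp add: zz_def field_simps)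
    have r: "rGamma (- \<nu> * real k / 2 + 1 - \<nu> / 2) = sin (pi * zz) * Gamma (zz + 1) / (pi * zz)"
      unfolding arg by (rule rGamma_refl_real[OF zz])
    have s: "sin (real (Suc k) * (pi - \<theta>)) = (-1)^k * sin (pi * zz)"
      unfolding sin_n_pi_minus by (simp add: zz_def \<theta>_def algebra_simps)
    have ga: "\<beta> * real (Suc k) + 1 = zz + 1" by (simp add: zz_def \<beta>_def)
    have neg: "(- \<bar>x\<bar> / (lam * t powr (\<nu>/2))) ^ k = (-1)^k * a^k"
      by (simp add: a_def tp_def power_minus[symmetric])
    show ?thesis unfolding T_def I_def c_def neg r s ga
      using a zz assms by (simp add: field_simps zz_def)
  qed
  have "T sums (2 / (a * pi * \<nu>) * integral {0..} f)"
    unfolding TI by (rule sums_mult[OF IS])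
  hence "u_sol \<nu> lam x t = 1 / (2 * lam * tp) * (2 / (a * pi * \<nu>) * integral {0..} f)"
    unfolding u_sol_def T_def tp_def by (simp add: sums_iff)
  also have "\<dots> = 1 / (pi * \<nu> * \<bar>x\<bar>) * integral {0..} f"
    using a tp assms by (simp add: a_def field_simps)
  finally show ?thesis using fint by simp
qed

end
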